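(* Let $\epsilon$ be a real number with $0 < \epsilon \leq 1$ and let $t$ be an integer such that every finite simple graph $G$ with $\Delta_\epsilon(G) \geq t$ satisfies $\chi(G) \leq \max\{\omega(G), \Delta_\epsilon(G)\}$. Then $t \geq 1 + \frac{2}{\epsilon}$.
   Context: For a graph $G$, $d(v)$ is the degree of $v$, $\chi(G)$ the chromatic number and $\omega(G)$ the clique number. For $0 \leq \epsilon \leq 1$, \[\Delta_\epsilon(G) = \left\lfloor \max_{xy \in E(G)} \Big( (1-\epsilon)\min\{d(x), d(y)\} + \epsilon \max\{d(x), d(y)\} \Big) \right\rfloor.\] *)

theory Defs
  imports Complex_Main
begin

definition simple_graph :: "'a set \<Rightarrow> 'a set set \<Rightarrow> bool" where
  "simple_graph V E \<longleftrightarrow> finite V \<and> (\<forall>e\<in>E. \<exists>x y. x \<in> V \<and> y \<in> V \<and> x \<noteq> y \<and> e = {x, y})"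

definition degree :: "'a set set \<Rightarrow> 'a \<Rightarrow> nat" where
  "degree E v = card {u. {u, v} \<in> E}"

definition proper_colouring :: "'a set \<Rightarrow> 'a set set \<Rightarrow> nat \<Rightarrow> ('a \<Rightarrow> nat) \<Rightarrow> bool" where
  "proper_colouring V E k c \<longleftrightarrow> c ` V \<subseteq> {..<k} \<and> (\<forall>x y. {x, y} \<in> E \<longrightarrow> c x \<noteq> c y)"

definition chromatic_number :: "'a set \<Rightarrow> 'a set set \<Rightarrow> nat" where
  "chromatic_number V E = (LEAST k. \<exists>c. proper_colouring V E k c)"

definition is_clique :: "'a set \<Rightarrow> 'a set set \<Rightarrow> 'a set \<Rightarrow> bool" where
  "is_clique V E K \<longleftrightarrow> K \<subseteq> V \<and> (\<forall>x\<in>K. \<forall>y\<in>K. x \<noteq> y \<longrightarrow> {x, y} \<in> E)"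

definition clique_number :: "'a set \<Rightarrow> 'a set set \<Rightarrow> nat" where
  "clique_number V E = Max {card K | K. is_clique V E K}"

text \<open>Delta_eps; by convention 0 for an edgeless graph (maximum over the empty set).\<close>
definition Delta_eps :: "real \<Rightarrow> 'a set \<Rightarrow> 'a set set \<Rightarrow> int" where
  "Delta_eps \<epsilon> V E = (if E = {} then 0 else
     \<lfloor>Max ((\<lambda>e. (1 - \<epsilon>) * real (Min (degree E ` e)) + \<epsilon> * real (Max (degree E ` e))) ` E)\<rfloor>)"

end

theory Submission imports Defs begin

definition hub :: "nat \<Rightarrow> nat \<Rightarrow> nat \<Rightarrow> bool" where
  "hub k x y \<longleftrightarrow> (x = k \<and> y < k div 2) \<or> (x = k+1 \<and> k div 2 \<le> y \<and> y < k)
     \<or> ((x = k \<or> x = k+1) \<and> k+2 \<le> y \<and> y \<le> 2*k)"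

definition adjG :: "nat \<Rightarrow> nat \<Rightarrow> nat \<Rightarrow> bool" where
  "adjG k x y \<longleftrightarrow> x \<noteq> y \<and> ((x < k \<and> y < k) \<or> (k+2 \<le> x \<and> x \<le> 2*k \<and> k+2 \<le> y \<and> y \<le> 2*k)
     \<or> hub k x y \<or> hub k y x)"

definition EG :: "nat \<Rightarrow> nat set set" where
  "EG k = {{x,y} | x y. adjG k x y}"

lemma adj_sym: "adjG k x y = adjG k y x"
  unfolding adjG_def by auto

lemma memE: "{u,v} \<in> EG k \<longleftrightarrow> adjG k u v"
  unfolding EG_def by (auto simp: doubleton_eq_iff adj_sym)

lemma degE: "degree (EG k) v = card {u. adjG k u v}"
  unfolding degree_def memE ..

context fixes k :: nat assumes k2: "2 \<le> k" begin

lemma nb_low: assumes "v < k"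
  shows "{u. adjG k u v} = ({..<k} - {v}) \<union> {if v < k div 2 then k else k+1}"
  using assms k2 unfolding adjG_def hub_def by auto

lemma deg_low: assumes "v < k" shows "degree (EG k) v = k"
proof -
  have "card (({..<k} - {v}) \<union> {if v < k div 2 then k else k+1}) = k"
    using assms by (subst card_Un_disjoint) auto
  then show ?thesis using nb_low[OF assms] degE by simp
qed

lemma deg_sec: assumes "k+2 \<le> v" "v \<le> 2*k" shows "degree (EG k) v \<le> k"
proof -
  have "{u. adjG k u v} \<subseteq> ({k+2..2*k} - {v}) \<union> {k, k+1}"
    using assms k2 unfolding adjG_def hub_def by auto
  hence "card {u. adjG k u v} \<le> card (({k+2..2*k} - {v}) \<union> {k, k+1})"
    by (intro card_mono) auto
  also have "\<dots> \<le> card ({k+2..2*k} - {v}) + card {k, k+1}" by (rule card_Un_le)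
  also have "\<dots> \<le> k" using assms by simp
  finally show ?thesis using degE by simp
qed

lemma deg_v1: "degree (EG k) k \<le> k + (k - k div 2 - 1)"
proof -
  have "{u. adjG k u k} \<subseteq> {..<k div 2} \<union> {k+2..2*k}"
    using k2 unfolding adjG_def hub_def by auto
  hence "card {u. adjG k u k} \<le> card ({..<k div 2} \<union> {k+2..2*k})"
    by (intro card_mono) auto
  also have "\<dots> \<le> card {..<k div 2} + card {k+2..2*k}" by (rule card_Un_le)
  also have "\<dots> \<le> k + (k - k div 2 - 1)" using k2 by simp
  finally show ?thesis using degE by simp
qed

lemma deg_v2: "degree (EG k) (k+1) \<le> k + (k - k div 2 - 1)"
proof -
  have "{u. adjG k u (k+1)} \<subseteq> {k div 2..<k} \<union> {k+2..2*k}"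
    using k2 unfolding adjG_def hub_def by auto
  hence "card {u. adjG k u (k+1)} \<le> card ({k div 2..<k} \<union> {k+2..2*k})"
    by (intro card_mono) auto
  also have "\<dots> \<le> card {k div 2..<k} + card {k+2..2*k}" by (rule card_Un_le)
  also have "\<dots> \<le> k + (k - k div 2 - 1)" using k2 by simp
  finally show ?thesis using degE by simp
qed

lemma deg_out: assumes "2*k < v" shows "degree (EG k) v = 0"
proof -
  have "{u. adjG k u v} = {}" using assms k2 unfolding adjG_def hub_def by auto
  thus ?thesis using degE by simp
qed

lemma deg_all: "degree (EG k) v \<le> k + (k - k div 2 - 1)"
proof -
  consider "v < k" | "v = k" | "v = k+1" | "k+2 \<le> v \<and> v \<le> 2*k" | "2*k < v" by linarith
  thus ?thesis
    by cases (use deg_low deg_v1 deg_v2 deg_sec deg_out in fastforce)+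
qed

lemma edge_low: assumes "adjG k x y" shows "degree (EG k) x \<le> k \<or> degree (EG k) y \<le> k"
proof -
  have "(x < k \<or> (k+2 \<le> x \<and> x \<le> 2*k)) \<or> (y < k \<or> (k+2 \<le> y \<and> y \<le> 2*k))"
    using assms k2 unfolding adjG_def hub_def by auto
  thus ?thesis using deg_low deg_sec by fastforce
qed


lemma clique_le: assumes "is_clique {..2*k} (EG k) K" shows "card K \<le> k"
proof -
  have adj: "\<And>x y. x \<in> K \<Longrightarrow> y \<in> K \<Longrightarrow> x \<noteq> y \<Longrightarrow> adjG k x y"
    using assms unfolding is_clique_def memE by blast
  have KV: "K \<subseteq> {..2*k}" using assms unfolding is_clique_def by blast
  have nb: "\<not> (k \<in> K \<and> k+1 \<in> K)"
    using adj[of k "k+1"] unfolding adjG_def hub_def by auto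
  show ?thesis
  proof (cases "\<exists>y\<in>K. k+2 \<le> y \<and> y \<le> 2*k")
    case True
    then obtain y where y: "y \<in> K" "k+2 \<le> y" "y \<le> 2*k" by blast
    have sub: "K \<subseteq> {k, k+1} \<union> {k+2..2*k}"
    proof
      fix x assume "x \<in> K"
      show "x \<in> {k, k+1} \<union> {k+2..2*k}"
      proof (cases "x = y")
        case False
        thus ?thesis using adj[OF \<open>x\<in>K\<close> y(1) False] y unfolding adjG_def hub_def by auto
      qed (use y in auto)
    qed
    have "K \<subseteq> insert k {k+2..2*k} \<or> K \<subseteq> insert (k+1) {k+2..2*k}"
      using sub nb by blast
    moreover have "card (insert k {k+2..2*k}) \<le> k" "card (insert (k+1) {k+2..2*k}) \<le> k"
      using k2 by (simp_all add: card_insert_if)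
    ultimately show ?thesis
      by (meson card_mono finite_atLeastAtMost finite_insert le_trans)
  next
    case False
    hence K2: "K \<subseteq> {..<k+2}" using KV by force
    show ?thesis
    proof (cases "k \<in> K")
      case True
      have "K \<subseteq> insert k {..<k div 2}"
      proof
        fix x assume "x \<in> K"
        show "x \<in> insert k {..<k div 2}"
        proof (cases "x = k")
          case False
          thus ?thesis using adj[OF \<open>x\<in>K\<close> True False] K2 \<open>x\<in>K\<close> unfolding adjG_def hub_def by auto
        qed simp
      qed
      moreover have "card (insert k {..<k div 2}) \<le> k" using k2 by (simp add: card_insert_if)
      ultimately show ?thesis by (meson card_mono finite_lessThan finite_insert le_trans)
    next
      case nk: False
      show ?thesis
      proof (cases "k+1 \<in> K")
        case True
        have "K \<subseteq> insert (k+1) {k div 2..<k}"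
        proof
          fix x assume "x \<in> K"
          show "x \<in> insert (k+1) {k div 2..<k}"
          proof (cases "x = k+1")
            case False
            thus ?thesis using adj[OF \<open>x\<in>K\<close> True False] K2 \<open>x\<in>K\<close> unfolding adjG_def hub_def by auto
          qed simp
        qed
        moreover have "card (insert (k+1) {k div 2..<k}) \<le> k" using k2 by (simp add: card_insert_if)
        ultimately show ?thesis by (meson card_mono finite_atLeastLessThan finite_insert le_trans)
      next
        case False
        hence "K \<subseteq> {..<k}" using K2 nk by (auto simp: less_Suc_eq)
        thus ?thesis using card_mono[of "{..<k}" K] by simp
      qed
    qed
  qed
qed

lemma no_col: assumes "proper_colouring {..2*k} (EG k) k c" shows False
proof -
  have cV: "c ` {..2*k} \<subseteq> {..<k}" and pr: "\<And>x y. adjG k x y \<Longrightarrow> c x \<noteq> c y"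
    using assms unfolding proper_colouring_def memE by auto
  define S where "S = {k+2..2*k}"
  have injS: "inj_on c S"
    by (rule inj_onI, rule ccontr) (use pr in \<open>auto simp: S_def adjG_def\<close>)
  have cS: "card (c ` S) = k - 1" using card_image[OF injS] by (simp add: S_def)
  have cSsub: "c ` S \<subseteq> {..<k}" using cV by (force simp: S_def)
  have v1: "c k \<notin> c ` S" "c (k+1) \<notin> c ` S"
    using pr unfolding S_def adjG_def hub_def by (force+)
  have v1k: "c k < k" "c (k+1) < k" using cV k2 by (auto simp: image_subset_iff)
  have eq: "insert (c k) (c ` S) = {..<k}"
    by (rule card_subset_eq) (use cS v1 v1k cSsub k2 in \<open>auto simp: card_insert_if S_def\<close>)
  hence ck: "c (k+1) = c k" using v1 v1k by blast
  have inj0: "inj_on c {..<k}"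
    by (rule inj_onI, rule ccontr) (use pr in \<open>auto simp: adjG_def\<close>)
  have "c ` {..<k} = {..<k}"
    by (rule card_subset_eq) (use cV card_image[OF inj0] in \<open>auto simp: image_subset_iff\<close>)
  then obtain i where i: "i < k" "c i = c k" using v1k by (metis imageE lessThan_iff)
  show False
  proof (cases "i < k div 2")
    case True thus False using pr[of i k] i unfolding adjG_def hub_def by auto
  next
    case False thus False using pr[of i "k+1"] i ck unfolding adjG_def hub_def by auto
  qed
qed


lemma sg: "simple_graph {..2*k} (EG k)"
  unfolding simple_graph_def
proof (intro conjI ballI)
  fix e assume "e \<in> EG k"
  then obtain x y where e: "e = {x,y}" "adjG k x y" unfolding EG_def by blast
  have "x \<le> 2*k \<and> y \<le> 2*k \<and> x \<noteq> y" using e(2) unfolding adjG_def hub_def by auto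
  thus "\<exists>x y. x \<in> {..2*k} \<and> y \<in> {..2*k} \<and> x \<noteq> y \<and> e = {x, y}" using e(1) by auto
qed simp

lemma finE: "finite (EG k)"
proof -
  have "EG k \<subseteq> Pow {..2*k}" using sg unfolding simple_graph_def by auto
  thus ?thesis by (rule finite_subset) simp
qed

lemma chi_ge: "k + 1 \<le> chromatic_number {..2*k} (EG k)"
proof -
  have ex: "proper_colouring {..2*k} (EG k) (2*k+1) (\<lambda>x. x)"
    unfolding proper_colouring_def memE adjG_def by auto
  hence ex': "\<exists>m c. proper_colouring {..2*k} (EG k) m c" by blast
  obtain c where c: "proper_colouring {..2*k} (EG k) (chromatic_number {..2*k} (EG k)) c"
    using LeastI_ex[OF ex'] unfolding chromatic_number_def by blast
  show ?thesis
  proof (rule ccontr)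
    assume "\<not> ?thesis"
    hence "proper_colouring {..2*k} (EG k) k c" using c unfolding proper_colouring_def by auto
    thus False by (rule no_col)
  qed
qed

lemma omega_le: "clique_number {..2*k} (EG k) \<le> k"
proof -
  have fin: "finite {card K | K. is_clique {..2*k} (EG k) K}"
  proof -
    have "{card K | K. is_clique {..2*k} (EG k) K} \<subseteq> card ` Pow {..2*k}"
      unfolding is_clique_def by auto
    thus ?thesis by (rule finite_subset) simp
  qed
  have ne: "{card K | K. is_clique {..2*k} (EG k) K} \<noteq> {}"
    unfolding is_clique_def by auto
  show ?thesis unfolding clique_number_def
    using fin ne clique_le by (auto simp: Max_le_iff)
qed

lemma delta_eq:
  fixes \<epsilon> :: real
  assumes "0 < \<epsilon>" "\<epsilon> \<le> 1" "\<epsilon> * real (k - k div 2 - 1) < 1"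
  shows "Delta_eps \<epsilon> {..2*k} (EG k) = int k"
proof -
  define f where "f = (\<lambda>e. (1 - \<epsilon>) * real (Min (degree (EG k) ` e)) + \<epsilon> * real (Max (degree (EG k) ` e)))"
  have e01: "{0,1} \<in> EG k" using k2 unfolding memE[of 0 1, unfolded numeral_1_eq_Suc_0] adjG_def
    by simp
  hence ne: "EG k \<noteq> {}" by auto
  have fv: "f {x,y} = (1-\<epsilon>) * real (min (degree (EG k) x) (degree (EG k) y)) + \<epsilon> * real (max (degree (EG k) x) (degree (EG k) y))" for x y
    unfolding f_def by (simp add: min_def max_def)
  have up: "f e < real k + 1" if "e \<in> EG k" for e
  proof -
    obtain x y where e: "e = {x,y}" "adjG k x y" using \<open>e \<in> EG k\<close> unfolding EG_def by blast
    let ?a = "real (min (degree (EG k) x) (degree (EG k) y))"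
    let ?b = "real (max (degree (EG k) x) (degree (EG k) y))"
    have a: "?a \<le> real k" using edge_low[OF e(2)] by auto
    have b: "?b \<le> real k + real (k - k div 2 - 1)" using deg_all[of x] deg_all[of y] by simp
    have "(1-\<epsilon>) * ?a \<le> (1-\<epsilon>) * real k" using a assms by (intro mult_left_mono) auto
    moreover have "\<epsilon> * ?b \<le> \<epsilon> * (real k + real (k - k div 2 - 1))" using b assms by (intro mult_left_mono) auto
    ultimately have "f e \<le> real k + \<epsilon> * real (k - k div 2 - 1)" unfolding e(1) fv by (simp add: algebra_simps)
    thus ?thesis using assms by linarith
  qed
  have low: "f {0,1} = real k" unfolding fv using deg_low[of 0] deg_low[of 1] k2 by (simp add: algebra_simps)
  have M1: "Max (f ` EG k) < real k + 1" using up finE ne by (simp add: Max_less_iff)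
  have M2: "real k \<le> Max (f ` EG k)" using finE e01 low by (metis Max_ge finite_imageI imageI)
  have "\<lfloor>Max (f ` EG k)\<rfloor> = int k" using M1 M2 by (simp add: floor_eq_iff)
  thus ?thesis unfolding Delta_eps_def f_def using ne by simp
qed

end

theorem mainTheorem6:
  fixes \<epsilon> :: real and t :: int
  assumes "0 < \<epsilon>" and "\<epsilon> \<le> 1"
    and "\<forall>(V :: nat set) E. simple_graph V E \<and> Delta_eps \<epsilon> V E \<ge> t \<longrightarrow>
           int (chromatic_number V E) \<le> max (int (clique_number V E)) (Delta_eps \<epsilon> V E)"
  shows "real_of_int t \<ge> 1 + 2 / \<epsilon>"
proof (rule ccontr)
  assume "\<not> ?thesis"
  hence lt: "real_of_int t < 1 + 2 / \<epsilon>" by simp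
  define k where "k = nat (max t 2)"
  have k2: "2 \<le> k" unfolding k_def by simp
  have tk: "t \<le> int k" unfolding k_def by linarith
  have eps: "\<epsilon> * real (k - k div 2 - 1) < 1"
  proof (cases "t \<le> 2")
    case True
    hence "k = 2" unfolding k_def by simp
    thus ?thesis by simp
  next
    case False
    hence kt: "int k = t" unfolding k_def by simp
    have "2 * (k - k div 2 - 1) \<le> k - 1" using k2 by linarith
    hence "real (2 * (k - k div 2 - 1)) \<le> real (k - 1)" by (simp only: of_nat_le_iff)
    hence "real (k - k div 2 - 1) \<le> (real k - 1) / 2" using k2 by (simp add: of_nat_diff)
    moreover have "\<epsilon> * (real k - 1) < 2"
    proof -
      have "real k - 1 < 2 / \<epsilon>" using lt kt by (metis of_int_of_nat_eq add.commute diff_less_eq)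
      hence "\<epsilon> * (real k - 1) < \<epsilon> * (2 / \<epsilon>)" using assms(1) by (intro mult_strict_left_mono) auto
      thus ?thesis using assms(1) by simp
    qed
    ultimately have "\<epsilon> * real (k - k div 2 - 1) \<le> \<epsilon> * ((real k - 1) / 2)"
      using assms(1) by (intro mult_left_mono) auto
    thus ?thesis using \<open>\<epsilon> * (real k - 1) < 2\<close> by linarith
  qed
  have D: "Delta_eps \<epsilon> {..2*k} (EG k) = int k" using delta_eq[OF k2 assms(1,2) eps] .
  have "int (chromatic_number {..2*k} (EG k)) \<le> max (int (clique_number {..2*k} (EG k))) (Delta_eps \<epsilon> {..2*k} (EG k))"
    using assms(3)[rule_format, of "{..2*k}" "EG k"] sg[OF k2] D tk by simp
  moreover have "k + 1 \<le> chromatic_number {..2*k} (EG k)" by (rule chi_ge[OF k2])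
  moreover have "clique_number {..2*k} (EG k) \<le> k" by (rule omega_le[OF k2])
  ultimately show False using D by linarith
qed

end
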